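(* Let $b\ge 1$, $k\ge 1$ and $1\le s\le k$ be integers. Then for every integer $t$, $$\sigma^{(b)}_{k}(t;s)=\frac{1}{k}\sum_{\xi\in\Delta_{k}}(\xi)_{s-1}\,\xi^{-t},$$ where $\Delta_k=\{e^{2\pi i h/k}: 1\le h\le k,\ \gcd(h,k)=1\}$ is the set of primitive $k$-th roots of unity and $(\xi)_{s-1}=(1-\xi)(1-\xi^2)\cdots(1-\xi^{s-1})$.
   Context: For a positive integer $m$, $(q)_m=(1-q)\cdots(1-q^m)$, $(q)_0=1$. For integers $b\ge 0$, $k\ge1$ and $1\le s\le k$, let $R^{(b)}_{k,s}(q)=\sum_{t=0}^{k-1}\sigma^{(b)}_k(t;s)q^t$ be the remainder of $\frac{1}{k^b}(q)_{k-1}^{\,b}(q)_{s-1}$ upon division by $1-q^k$; the values $\sigma^{(b)}_k(t;s)$ are extended to all integers $t$ by $k$-periodicity. *)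

theory Defs
  imports "HOL-Complex_Analysis.Complex_Analysis" "HOL-Computational_Algebra.Polynomial"
begin

definition qpoch :: "nat \<Rightarrow> 'a::comm_ring_1 poly" where
  "qpoch m = (\<Prod>i=1..m. 1 - monom 1 i)"

definition Rpoly :: "nat \<Rightarrow> nat \<Rightarrow> nat \<Rightarrow> rat poly" where
  "Rpoly b k s = (smult (1 / of_nat k ^ b) (qpoch (k - 1) ^ b * qpoch (s - 1))) mod (1 - monom 1 k)"

definition sigma :: "nat \<Rightarrow> nat \<Rightarrow> nat \<Rightarrow> int \<Rightarrow> rat" where
  "sigma b k s t = coeff (Rpoly b k s) (nat (t mod int k))"

definition prim_roots :: "nat \<Rightarrow> complex set" where
  "prim_roots k = {cis (2 * pi * real h / real k) | h. 1 \<le> h \<and> h \<le> k \<and> coprime h k}"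

definition qpoch_val :: "complex \<Rightarrow> nat \<Rightarrow> complex" where
  "qpoch_val x m = (\<Prod>j=1..m. 1 - x ^ j)"

end

theory Submission
  imports Defs "HOL-Computational_Algebra.Fundamental_Theorem_Algebra"
begin


lemma w_pow:
  assumes "k > 0"
  shows "cis (2 * pi / real k) ^ n = cis (2 * pi * real n / real k)"
  by (simp add: Complex.DeMoivre mult.commute)

lemma w_pow_eq_1:
  assumes "k > 0"
  shows "cis (2 * pi / real k) ^ n = 1 \<longleftrightarrow> k dvd n"
proof -
  let ?w = "cis (2 * pi / real k)"
  have wk: "?w ^ k = 1" using assms by (simp add: w_pow)
  have "?w ^ n = ?w ^ (k * (n div k) + n mod k)" by (metis div_mult_mod_eq mult.commute)
  also have "\<dots> = ?w ^ (n mod k)" unfolding power_add power_mult wk by simp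
  finally have e: "?w ^ n = ?w ^ (n mod k)" .
  have inj: "inj_on (\<lambda>j. cis (2 * pi * real j / real k)) {..<k}"
    using Complex.bij_betw_roots_unity[OF assms] by (simp add: bij_betw_def)
  show ?thesis
  proof
    assume "?w ^ n = 1"
    hence "cis (2 * pi * real (n mod k) / real k) = cis (2 * pi * real 0 / real k)"
      using e assms by (simp add: w_pow)
    hence "n mod k = 0" using inj_onD[OF inj] assms by force
    thus "k dvd n" by auto
  next
    assume "k dvd n" then show "?w ^ n = 1" using e by simp
  qed
qed

lemma geom_roots:
  fixes z :: complex
  assumes "z ^ k = 1"
  shows "(\<Sum>j=1..k. z ^ j) = (if z = 1 then of_nat k else 0)"
proof -
  have "(\<Sum>j=1..k. z ^ j) = (\<Sum>j<k. z ^ Suc j)"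
    by (simp add: sum.atLeast1_atMost_eq)
  also have "\<dots> = z * (\<Sum>j<k. z ^ j)" by (simp add: sum_distrib_left)
  finally have *: "(\<Sum>j=1..k. z ^ j) = z * (\<Sum>j<k. z ^ j)" .
  show ?thesis
  proof (cases "z = 1")
    case False
    have "(z - 1) * (\<Sum>j<k. z ^ j) = 0" using power_diff_1_eq[of z k] assms by simp
    with False have "(\<Sum>j<k. z ^ j) = 0" by simp
    with * False show ?thesis by simp
  qed simp
qed

lemma powi_mod:
  fixes z :: complex
  assumes "z ^ k = 1" "k > 0"
  shows "z powi n = z powi (n mod int k)"
proof -
  have z0: "z \<noteq> 0" using assms by (metis power_0_left zero_neq_one not_gr0)
  have "z powi n = z powi (n mod int k + int k * (n div int k))" by (metis mod_mult_div_eq add.commute)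
  also have "\<dots> = z powi (n mod int k) * (z powi int k) powi (n div int k)"
    unfolding power_int_add[OF disjI1[OF z0]] power_int_mult by simp
  also have "\<dots> = z powi (n mod int k)" using assms by simp
  finally show ?thesis .
qed

lemma powi_neg:
  fixes z :: complex
  assumes "z ^ k = 1" "k > 0"
  shows "z powi (- t) = z ^ (k - nat (t mod int k))"
proof -
  have "z ^ (k - nat (t mod int k)) = z powi int (k - nat (t mod int k))" by simp
  also have "\<dots> = z powi (int (k - nat (t mod int k)) mod int k)" by (rule powi_mod[OF assms])
  also have "int (k - nat (t mod int k)) mod int k = (- t) mod int k"
  proof -
    have "0 \<le> t mod int k" "t mod int k < int k" using assms by auto
    hence "int (k - nat (t mod int k)) = int k - t mod int k" by linarith
    thus ?thesis by (metis add.inverse_inverse diff_minus_eq_add mod_add_self1 mod_minus_eq uminus_add_conv_diff add.commute)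
  qed
  also have "z powi (- t mod int k) = z powi (- t)" by (rule powi_mod[OF assms, symmetric])
  finally show ?thesis ..
qed


lemma prod_nontriv_roots:
  assumes "k > 0"
  shows "(\<Prod>z\<in>{z::complex. z ^ k = 1} - {1}. 1 - z) = of_nat k"
proof -
  define p :: "complex poly" where "p = monom 1 k - 1"
  let ?U = "{z::complex. z ^ k = 1}"
  have finU: "finite ?U" using assms by (intro finite_roots_unity) simp
  have deg: "degree p = k" using assms unfolding p_def
  proof -
    have "degree (monom (1::complex) k + - 1) = degree (monom (1::complex) k)"
      by (rule degree_add_eq_left) (use assms in \<open>simp add: degree_monom_eq\<close>)
    thus "degree (monom 1 k - 1 :: complex poly) = k" by (simp add: degree_monom_eq)
  qed
  have lc: "lead_coeff p = 1" using assms deg unfolding p_def by simp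
  have roots: "{z. poly p z = 0} = ?U" unfolding p_def by (auto simp: poly_monom)
  have rsq: "rsquarefree p"
    unfolding rsquarefree_roots
  proof (intro allI notI)
    fix a assume "poly p a = 0 \<and> poly (pderiv p) a = 0"
    hence a1: "a ^ k = 1" and a2: "of_nat k * a ^ (k - 1) = 0"
      unfolding p_def by (auto simp: poly_monom pderiv_monom pderiv_diff)
    from a1 assms have "a \<noteq> 0" by (metis power_0_left zero_neq_one not_gr0)
    with a2 assms show False by simp
  qed
  have "p = (\<Prod>z\<in>?U. [:-z, 1:])"
    using complex_poly_decompose_rsquarefree[OF rsq] lc roots by simp
  also have "\<dots> = [:-1, 1:] * (\<Prod>z\<in>?U - {1}. [:-z, 1:])"
    using finU by (subst prod.remove[of _ 1]) auto
  finally have e1: "p = [:-1, 1:] * (\<Prod>z\<in>?U - {1}. [:-z, 1:])" .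
  have "p = [:0, 1:] ^ k - 1" unfolding p_def by (simp add: monom_altdef)
  also have "\<dots> = ([:0,1:] - 1) * (\<Sum>i<k. [:0,1:] ^ i)" by (rule power_diff_1_eq)
  also have "[:0,1:] - 1 = ([:-1, 1:] :: complex poly)" by (simp add: one_pCons)
  finally have "[:-1, 1:] * (\<Prod>z\<in>?U - {1}. [:-z, 1:]) = [:-1, 1:] * (\<Sum>i<k. [:0,1:] ^ i)"
    using e1 by simp
  hence "(\<Prod>z\<in>?U - {1}. [:-z, 1:]) = (\<Sum>i<k. [:0::complex,1:] ^ i)"
    by (rule mult_left_cancel[THEN iffD1, rotated]) simp
  hence "poly (\<Prod>z\<in>?U - {1}. [:-z, 1:]) 1 = poly (\<Sum>i<k. [:0::complex,1:] ^ i) 1" by simp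
  thus ?thesis by (simp add: poly_prod poly_sum)
qed


lemma prim_prod:
  assumes "k > 0" "coprime j k"
  shows "qpoch_val (cis (2 * pi / real k) ^ j) (k - 1) = of_nat k"
proof -
  define w where "w = cis (2 * pi / real k)"
  define \<zeta> where "\<zeta> = w ^ j"
  let ?U = "{z::complex. z ^ k = 1}"
  have weq: "w ^ n = 1 \<longleftrightarrow> k dvd n" for n unfolding w_def by (rule w_pow_eq_1[OF assms(1)])
  have zeq: "\<zeta> ^ n = 1 \<longleftrightarrow> k dvd n" for n
  proof -
    have "\<zeta> ^ n = w ^ (j * n)" unfolding \<zeta>_def by (simp add: power_mult)
    hence "\<zeta> ^ n = 1 \<longleftrightarrow> k dvd j * n" using weq by simp
    also have "\<dots> \<longleftrightarrow> k dvd n" using assms(2)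
      by (metis coprime_commute coprime_dvd_mult_right_iff)
    finally show ?thesis .
  qed
  have w0: "w \<noteq> 0" unfolding w_def by simp
  have z0: "\<zeta> \<noteq> 0" unfolding \<zeta>_def using w0 by simp
  have inj: "inj_on (\<lambda>i. \<zeta> ^ i) {1..k-1}"
  proof (rule inj_onI)
    fix a b assume ab: "a \<in> {1..k-1}" "b \<in> {1..k-1}" "\<zeta> ^ a = \<zeta> ^ b"
    have diff1: "\<zeta> ^ (b - a) = 1" if "a \<le> b" "\<zeta> ^ a = \<zeta> ^ b" for a b
    proof -
      have "\<zeta> ^ a * \<zeta> ^ (b - a) = \<zeta> ^ b" by (metis power_add le_add_diff_inverse that(1))
      hence "\<zeta> ^ a * \<zeta> ^ (b - a) = \<zeta> ^ a * 1" using that(2) by simp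
      thus ?thesis using z0 by simp
    qed
    show "a = b"
    proof (cases "a \<le> b")
      case True
      hence "k dvd b - a" using zeq ab diff1 by metis
      moreover have "b - a < k" using ab by auto
      ultimately show ?thesis using True by (metis dvd_imp_le diff_is_0_eq le_antisym not_le neq0_conv)
    next
      case False
      hence "k dvd a - b" using zeq ab diff1[of b a] by simp
      moreover have "a - b < k" using ab by auto
      ultimately show ?thesis using False by (metis dvd_imp_le diff_is_0_eq le_antisym not_le neq0_conv)
    qed
  qed
  have sub: "(\<lambda>i. \<zeta> ^ i) ` {1..k-1} \<subseteq> ?U - {1}"
  proof safe
    fix i assume i: "i \<in> {1..k-1}"
    show "(\<zeta> ^ i) ^ k = 1" by (simp add: power_mult[symmetric] zeq)
    assume "\<zeta> ^ i = 1"
    hence "k dvd i" using zeq by simp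
    with i show False by (auto dest: dvd_imp_le)
  qed
  have finU: "finite ?U" using assms by (intro finite_roots_unity) simp
  have "card ((\<lambda>i. \<zeta> ^ i) ` {1..k-1}) = k - 1" using card_image[OF inj] by simp
  also have "\<dots> = card (?U - {1})" using card_roots_unity_eq[OF assms(1)] finU by simp
  finally have "(\<lambda>i. \<zeta> ^ i) ` {1..k-1} = ?U - {1}"
    using finU sub by (intro card_subset_eq) auto
  hence bij: "bij_betw (\<lambda>i. \<zeta> ^ i) {1..k-1} (?U - {1})" using inj by (simp add: bij_betw_def)
  have "qpoch_val \<zeta> (k - 1) = (\<Prod>z\<in>?U - {1}. 1 - z)"
    unfolding qpoch_val_def by (rule prod.reindex_bij_betw[OF bij])
  also have "\<dots> = of_nat k" by (rule prod_nontriv_roots[OF assms(1)])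
  finally show ?thesis unfolding \<zeta>_def w_def .
qed

lemma nonprim_prod:
  assumes "1 \<le> j" "j \<le> k" "\<not> coprime j k"
  shows "qpoch_val (cis (2 * pi / real k) ^ j) (k - 1) = 0"
proof -
  have k0: "k > 0" using assms by simp
  define g where "g = gcd j k"
  define d where "d = k div g"
  have g1: "g > 1" using assms unfolding g_def
    by (metis coprime_iff_gcd_eq_1 gcd_pos_nat le_neq_implies_less nat_less_le not_one_le_zero less_one not_less)
  have gk: "g dvd k" "g dvd j" unfolding g_def by auto
  have d1: "d \<ge> 1" "d < k" unfolding d_def using gk g1 k0
    by (auto simp: dvd_div_eq_0_iff div_less_dividend intro!: Suc_leI)
  have "j * d = (j div g) * k" unfolding d_def using gk
    by (metis div_mult_swap dvd_div_mult mult.commute)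
  hence "(cis (2 * pi / real k) ^ j) ^ d = 1"
    by (simp add: power_mult[symmetric] w_pow_eq_1[OF k0])
  hence "\<exists>i\<in>{1..k-1}. 1 - (cis (2 * pi / real k) ^ j) ^ i = 0" using d1 by (intro bexI[of _ d]) auto
  thus ?thesis unfolding qpoch_val_def by (simp add: prod_zero_iff)
qed


abbreviation mq :: "rat poly \<Rightarrow> complex poly" where "mq \<equiv> map_poly of_rat"

lemma mq_add: "mq (p + q) = mq p + mq q"
  by (rule poly_eqI) (simp add: coeff_map_poly of_rat_add)
lemma mq_diff: "mq (p - q) = mq p - mq q"
  by (rule poly_eqI) (simp add: coeff_map_poly of_rat_diff)
lemma mq_mult: "mq (p * q) = mq p * mq q"
  by (rule poly_eqI) (simp add: coeff_map_poly coeff_mult of_rat_sum of_rat_mult)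
lemma mq_smult: "mq (smult c p) = smult (of_rat c) (mq p)"
  by (rule poly_eqI) (simp add: coeff_map_poly of_rat_mult)
lemma mq_monom: "mq (monom c n) = monom (of_rat c) n"
  by (simp add: map_poly_monom)
lemma mq_1: "mq 1 = 1" by simp
lemma mq_power: "mq (p ^ n) = mq p ^ n"
  by (induction n) (simp_all add: mq_mult)
lemma mq_prod: "mq (\<Prod>i\<in>A. f i) = (\<Prod>i\<in>A. mq (f i))"
  by (induction A rule: infinite_finite_induct) (simp_all add: mq_mult)

lemma poly_mq_qpoch: "poly (mq (qpoch m)) z = qpoch_val z m"
  unfolding qpoch_def qpoch_val_def
  by (simp add: mq_prod mq_diff mq_monom poly_prod poly_monom)

lemma poly_lt:
  fixes p :: "'a::comm_ring_1 poly"
  assumes "\<And>i. i \<ge> n \<Longrightarrow> coeff p i = 0"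
  shows "poly p x = (\<Sum>i<n. coeff p i * x ^ i)"
proof -
  have "poly p x = (\<Sum>i\<le>degree p. coeff p i * x ^ i)" by (rule poly_altdef)
  also have "\<dots> = (\<Sum>i<max n (Suc (degree p)). coeff p i * x ^ i)"
    by (rule sum.mono_neutral_left) (auto simp: coeff_eq_0)
  also have "\<dots> = (\<Sum>i<n. coeff p i * x ^ i)"
    by (rule sum.mono_neutral_right) (auto simp: coeff_eq_0 assms)
  finally show ?thesis .
qed


theorem lemma2p4:
  fixes b k s :: nat and t :: int
  assumes "b \<ge> 1" and "k \<ge> 1" and "1 \<le> s" and "s \<le> k"
  shows "of_rat (sigma b k s t) =
    (1 / of_nat k) * (\<Sum>\<xi>\<in>prim_roots k. qpoch_val \<xi> (s - 1) * \<xi> powi (- t))"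
proof -
  have k0: "k > 0" using assms by simp
  define w where "w = cis (2 * pi / real k)"
  define D :: "rat poly" where "D = 1 - monom 1 k"
  define P :: "rat poly" where "P = smult (1 / of_nat k ^ b) (qpoch (k - 1) ^ b * qpoch (s - 1))"
  define R where "R = Rpoly b k s"
  have RPD: "R = P mod D" unfolding R_def Rpoly_def P_def D_def ..
  define t0 where "t0 = nat (t mod int k)"
  have t0k: "t0 < k" unfolding t0_def using k0 by (simp add: nat_less_iff)
  have sig: "sigma b k s t = coeff R t0" unfolding sigma_def R_def t0_def ..
  define c where "c i = (of_rat (coeff R i) :: complex)" for i
  have degD: "degree D = k"
  proof -
    have "degree (- monom (1::rat) k + 1) = degree (- monom (1::rat) k)"
      by (rule degree_add_eq_left) (use k0 in \<open>simp add: degree_monom_eq\<close>)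
    thus ?thesis unfolding D_def by (simp add: degree_monom_eq)
  qed
  have D0: "D \<noteq> 0" using degD k0 by auto
  have cR: "coeff R i = 0" if "i \<ge> k" for i
  proof -
    have "R = 0 \<or> degree R < degree D" unfolding RPD using degree_mod_less[OF D0] by simp
    thus ?thesis using that degD by (auto intro: coeff_eq_0)
  qed
  have polyR: "poly (mq R) z = (\<Sum>i<k. c i * z ^ i)" for z
    by (subst poly_lt[of k]) (simp_all add: coeff_map_poly cR c_def)
  have wpow1: "(w ^ j) ^ k = 1" for j
    unfolding w_def by (simp add: power_mult[symmetric] w_pow_eq_1[OF k0])
  have evalR: "poly (mq R) z = of_rat (1 / of_nat k ^ b) * qpoch_val z (k - 1) ^ b * qpoch_val z (s - 1)"
    if "z ^ k = 1" for z
  proof -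
    have "P = (P div D) * D + R" unfolding RPD by simp
    hence "mq P = mq (P div D) * mq D + mq R" by (metis mq_add mq_mult)
    moreover have "poly (mq D) z = 0" unfolding D_def using that
      by (simp add: mq_diff mq_monom poly_monom)
    ultimately have "poly (mq R) z = poly (mq P) z" by simp
    also have "\<dots> = of_rat (1 / of_nat k ^ b) * qpoch_val z (k - 1) ^ b * qpoch_val z (s - 1)"
      unfolding P_def by (simp add: mq_smult mq_mult mq_power poly_mq_qpoch)
    finally show ?thesis .
  qed
  have evalRw: "poly (mq R) (w ^ j) = (if coprime j k then qpoch_val (w ^ j) (s - 1) else 0)"
    if "j \<in> {1..k}" for j
  proof (cases "coprime j k")
    case True
    have "poly (mq R) (w ^ j) = of_rat (1 / of_nat k ^ b) * of_nat k ^ b * qpoch_val (w ^ j) (s - 1)"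
      using evalR[OF wpow1[of j]] prim_prod[OF k0 True] unfolding w_def by simp
    also have "\<dots> = qpoch_val (w ^ j) (s - 1)" using k0 by (simp add: of_rat_divide of_rat_power)
    finally show ?thesis using True by simp
  next
    case False
    have "qpoch_val (w ^ j) (k - 1) = 0" using nonprim_prod[of j k] that False unfolding w_def by simp
    thus ?thesis using evalR[OF wpow1[of j]] False assms(1) by simp
  qed
  \<comment> \<open>Fourier inversion\<close>
  have four: "(\<Sum>j=1..k. poly (mq R) (w ^ j) * (w ^ j) ^ (k - t0)) = of_nat k * c t0"
  proof -
    have "(\<Sum>j=1..k. poly (mq R) (w ^ j) * (w ^ j) ^ (k - t0))
        = (\<Sum>j=1..k. \<Sum>m<k. c m * (w ^ (m + (k - t0))) ^ j)"
      unfolding polyR sum_distrib_right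
    proof (intro sum.cong refl)
      fix j m
      have "(w ^ j) ^ m * (w ^ j) ^ (k - t0) = (w ^ m) ^ j * (w ^ (k - t0)) ^ j"
        by (metis power_mult mult.commute)
      also have "\<dots> = (w ^ (m + (k - t0))) ^ j" by (simp add: power_add power_mult_distrib)
      finally show "c m * (w ^ j) ^ m * (w ^ j) ^ (k - t0) = c m * (w ^ (m + (k - t0))) ^ j"
        by (simp add: mult.assoc)
    qed
    also have "\<dots> = (\<Sum>m<k. c m * (\<Sum>j=1..k. (w ^ (m + (k - t0))) ^ j))"
      by (subst sum.swap) (simp add: sum_distrib_left)
    also have "\<dots> = (\<Sum>m<k. c m * (if m = t0 then of_nat k else 0))"
    proof (intro sum.cong refl)
      fix m assume m: "m \<in> {..<k}"
      have "(w ^ (m + (k - t0))) ^ k = 1" by (metis wpow1)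
      moreover have "w ^ (m + (k - t0)) = 1 \<longleftrightarrow> m = t0"
      proof -
        have "w ^ (m + (k - t0)) = 1 \<longleftrightarrow> k dvd m + (k - t0)" unfolding w_def by (rule w_pow_eq_1[OF k0])
        also have "\<dots> \<longleftrightarrow> m = t0"
        proof
          assume "k dvd m + (k - t0)"
          then obtain q where q: "m + (k - t0) = k * q" by blast
          have "q \<noteq> 0" proof assume "q = 0" thus False using q t0k by simp qed
          moreover have "\<not> q \<ge> 2"
          proof
            assume "q \<ge> 2"
            hence "k * q \<ge> k * 2" by simp
            thus False using q m t0k unfolding lessThan_iff by linarith
          qed
          ultimately have "q = 1" by simp
          thus "m = t0" using q t0k by simp
        qed (use t0k in simp)
        finally show ?thesis .
      qed
      ultimately show "c m * (\<Sum>j=1..k. (w ^ (m + (k - t0))) ^ j) = c m * (if m = t0 then of_nat k else 0)"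
        using geom_roots[of "w ^ (m + (k - t0))" k] by simp
    qed
    also have "\<dots> = of_nat k * c t0"
    proof - have "(\<Sum>m<k. c m * (if m = t0 then complex_of_nat k else 0)) = (\<Sum>m<k. if m = t0 then c m * of_nat k else 0)" by (intro sum.cong) auto thus ?thesis using t0k by (simp add: mult.commute) qed
    finally show ?thesis .
  qed
  have sum2: "(\<Sum>j=1..k. poly (mq R) (w ^ j) * (w ^ j) ^ (k - t0))
      = (\<Sum>j\<in>{j\<in>{1..k}. coprime j k}. qpoch_val (w ^ j) (s - 1) * (w ^ j) powi (- t))"
  proof -
    have "(\<Sum>j=1..k. poly (mq R) (w ^ j) * (w ^ j) ^ (k - t0))
        = (\<Sum>j=1..k. if coprime j k then qpoch_val (w ^ j) (s - 1) * (w ^ j) powi (- t) else 0)"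
      by (intro sum.cong refl) (simp add: evalRw powi_neg[OF wpow1 k0] t0_def)
    also have "\<dots> = (\<Sum>j\<in>{j\<in>{1..k}. coprime j k}. qpoch_val (w ^ j) (s - 1) * (w ^ j) powi (- t))"
      by (subst sum.inter_filter) auto
    finally show ?thesis .
  qed
  have prim: "prim_roots k = (\<lambda>j. w ^ j) ` {j\<in>{1..k}. coprime j k}"
    unfolding prim_roots_def w_def by (auto simp: w_pow[OF k0])
  have injw: "inj_on (\<lambda>j. w ^ j) {j\<in>{1..k}. coprime j k}"
  proof (rule inj_onI)
    fix a b assume ab: "a \<in> {j\<in>{1..k}. coprime j k}" "b \<in> {j\<in>{1..k}. coprime j k}" "w ^ a = w ^ b"
    have w0: "w \<noteq> 0" unfolding w_def by simp
    have d: "k dvd y - x" if "x \<le> y" "w ^ x = w ^ y" for x y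
    proof -
      have "w ^ x * w ^ (y - x) = w ^ y" by (metis power_add le_add_diff_inverse that(1))
      hence "w ^ x * w ^ (y - x) = w ^ x * 1" using that(2) by simp
      hence "w ^ (y - x) = 1" using w0 by simp
      thus ?thesis unfolding w_def using w_pow_eq_1[OF k0] by simp
    qed
    show "a = b"
    proof (cases "a \<le> b")
      case True
      with d[OF True ab(3)] ab show ?thesis by (auto dest!: dvd_imp_le)
    next
      case False
      with d[of b a] ab show ?thesis by (auto dest!: dvd_imp_le)
    qed
  qed
  have "of_rat (sigma b k s t) = c t0" unfolding sig c_def ..
  also have "\<dots> = (1 / of_nat k) * (of_nat k * c t0)" using k0 by simp
  also have "\<dots> = (1 / of_nat k) * (\<Sum>j\<in>{j\<in>{1..k}. coprime j k}. qpoch_val (w ^ j) (s - 1) * (w ^ j) powi (- t))"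
    using four sum2 by simp
  also have "\<dots> = (1 / of_nat k) * (\<Sum>\<xi>\<in>prim_roots k. qpoch_val \<xi> (s - 1) * \<xi> powi (- t))"
    unfolding prim by (subst sum.reindex[OF injw]) (simp add: o_def)
  finally show ?thesis .
qed

end
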